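(* Let $k\ge1$ and $n\ge1$. Let $I_1,I'_1,\dots,I_k,I'_k$ be sets of consecutive integers in $\{1,\dots,n\}$ such that for each $i$, $I_i,I'_i$ is a 1-shift pair, and for each $i=2,\dots,k$, $I_i\cap I'_i\supseteq I_{i-1}\cup I'_{i-1}$. Let $A$ be the $2k\times n$ $(0,1)$-matrix whose row $i$ has its 1's exactly in the columns of $I_i$ and whose row $2k+1-i$ has its 1's exactly in the columns of $I'_i$ ($i=1,\dots,k$), and suppose $A$ has no zero column. Let $R$ and $S$ be the row and column sum vectors of $A$. Then $\mathcal{A}(R,S)$ is a convex-class and consists of exactly $2^k$ matrices.
   Context: $\mathcal{A}(R,S)$ is the set of $(0,1)$-matrices with row sum vector $R$ and column sum vector $S$. A $(0,1)$-matrix is convex if in every row and column the 1's occur consecutively; $\mathcal{A}(R,S)$ is a convex-class if every matrix in it is convex. Two intervals $I=\{a,a+1,\dots,b\}$ and $I'=\{a+1,\dots,b+1\}$ with $a<b$ (in either order) form a 1-shift pair. *)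

theory Defs
  imports Main
begin

text \<open>An m x n (0,1)-matrix is represented as a function nat \<Rightarrow> nat \<Rightarrow> nat,
  rows indexed 1..m, columns 1..n, entries in {0,1}, and zero outside this range
  (so that distinct matrices are distinct functions).\<close>

definition zero_one_matrices :: "nat \<Rightarrow> nat \<Rightarrow> (nat \<Rightarrow> nat \<Rightarrow> nat) set" where
  "zero_one_matrices m n =
     {A. (\<forall>i j. A i j \<in> {0, 1}) \<and>
         (\<forall>i j. (i \<notin> {1..m} \<or> j \<notin> {1..n}) \<longrightarrow> A i j = 0)}"

definition row_sum :: "nat \<Rightarrow> (nat \<Rightarrow> nat \<Rightarrow> nat) \<Rightarrow> nat \<Rightarrow> nat" where
  "row_sum n A i = (\<Sum>j = 1..n. A i j)"

definition col_sum :: "nat \<Rightarrow> (nat \<Rightarrow> nat \<Rightarrow> nat) \<Rightarrow> nat \<Rightarrow> nat" where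
  "col_sum m A j = (\<Sum>i = 1..m. A i j)"

definition matrix_class :: "nat \<Rightarrow> nat \<Rightarrow> (nat \<Rightarrow> nat) \<Rightarrow> (nat \<Rightarrow> nat) \<Rightarrow> (nat \<Rightarrow> nat \<Rightarrow> nat) set" where
  "matrix_class m n R S =
     {A \<in> zero_one_matrices m n.
        (\<forall>i \<in> {1..m}. row_sum n A i = R i) \<and> (\<forall>j \<in> {1..n}. col_sum m A j = S j)}"

definition convex_matrix :: "nat \<Rightarrow> nat \<Rightarrow> (nat \<Rightarrow> nat \<Rightarrow> nat) \<Rightarrow> bool" where
  "convex_matrix m n A \<longleftrightarrow>
     (\<forall>i \<in> {1..m}. \<forall>j1 j j2. j1 \<le> j \<and> j \<le> j2 \<and> A i j1 = 1 \<and> A i j2 = 1 \<longrightarrow> A i j = 1) \<and>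
     (\<forall>j \<in> {1..n}. \<forall>i1 i i2. i1 \<le> i \<and> i \<le> i2 \<and> A i1 j = 1 \<and> A i2 j = 1 \<longrightarrow> A i j = 1)"

definition convex_class :: "nat \<Rightarrow> nat \<Rightarrow> (nat \<Rightarrow> nat) \<Rightarrow> (nat \<Rightarrow> nat) \<Rightarrow> bool" where
  "convex_class m n R S \<longleftrightarrow> (\<forall>A \<in> matrix_class m n R S. convex_matrix m n A)"

definition one_shift_pair :: "nat set \<Rightarrow> nat set \<Rightarrow> bool" where
  "one_shift_pair I I' \<longleftrightarrow>
     (\<exists>a b. a < b \<and> ((I = {a..b} \<and> I' = {a+1..b+1}) \<or> (I' = {a..b} \<and> I = {a+1..b+1})))"

definition pair_matrix :: "nat \<Rightarrow> (nat \<Rightarrow> nat set) \<Rightarrow> (nat \<Rightarrow> nat set) \<Rightarrow> nat \<Rightarrow> nat \<Rightarrow> nat" where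
  "pair_matrix k I I' i j =
     (if 1 \<le> i \<and> i \<le> k then (if j \<in> I i then 1 else 0)
      else if k < i \<and> i \<le> 2 * k then (if j \<in> I' (2 * k + 1 - i) then 1 else 0)
      else 0)"

end

theory Submission
  imports Defs
begin



lemma sum01_card:
  assumes "finite S" "\<forall>x\<in>S. f x \<in> {0,1::nat}"
  shows "sum f S = card {x\<in>S. f x = 1}"
proof -
  have "sum f S = sum (\<lambda>x. if f x = 1 then 1 else 0) S"
    using assms(2) by (intro sum.cong) auto
  also have "\<dots> = card {x\<in>S. f x = 1}"
    using assms(1) by (simp add: sum.inter_filter[symmetric])
  finally show ?thesis .
qed

definition rowset :: "nat \<Rightarrow> (nat \<Rightarrow> nat \<Rightarrow> nat) \<Rightarrow> nat \<Rightarrow> nat set" where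
  "rowset n N r = {j\<in>{1..n}. N r j = 1}"

lemma row_sum_card:
  assumes "N \<in> zero_one_matrices m n"
  shows "row_sum n N r = card (rowset n N r)"
  using assms unfolding row_sum_def rowset_def zero_one_matrices_def
  by (intro sum01_card) auto

lemma sum_T_card:
  assumes "N \<in> zero_one_matrices m n" "T \<subseteq> {1..n}"
  shows "(\<Sum>j\<in>T. col_sum m N j) = (\<Sum>r\<in>{1..m}. card (rowset n N r \<inter> T))"
proof -
  have fT: "finite T" using assms(2) finite_subset by blast
  have "(\<Sum>j\<in>T. col_sum m N j) = (\<Sum>r\<in>{1..m}. \<Sum>j\<in>T. N r j)"
    unfolding col_sum_def by (rule sum.swap)
  also have "\<dots> = (\<Sum>r\<in>{1..m}. card (rowset n N r \<inter> T))"
  proof (rule sum.cong)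
    fix r assume "r \<in> {1..m}"
    have "(\<Sum>j\<in>T. N r j) = card {j\<in>T. N r j = 1}"
      using assms(1) fT unfolding zero_one_matrices_def by (intro sum01_card) auto
    also have "{j\<in>T. N r j = 1} = rowset n N r \<inter> T"
      using assms(2) unfolding rowset_def by auto
    finally show "(\<Sum>j\<in>T. N r j) = card (rowset n N r \<inter> T)" .
  qed simp
  finally show ?thesis .
qed

lemma rows_forced:
  assumes M: "M \<in> matrix_class m n R S" and A: "A \<in> matrix_class m n R S"
    and T: "T \<subseteq> {1..n}"
    and H: "\<forall>r\<in>{1..m}. rowset n A r \<subseteq> T \<or> T \<subseteq> rowset n A r"
    and r: "r \<in> {1..m}"
  shows "(T \<subseteq> rowset n A r \<longrightarrow> T \<subseteq> rowset n M r) \<and> (rowset n A r \<subseteq> T \<longrightarrow> rowset n M r \<subseteq> T)"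
proof -
  have fT: "finite T" using T finite_subset by blast
  have M01: "M \<in> zero_one_matrices m n" and A01: "A \<in> zero_one_matrices m n"
    using M A unfolding matrix_class_def by auto
  have fr: "finite (rowset n N q)" for N q unfolding rowset_def by auto
  have "(\<Sum>j\<in>T. col_sum m M j) = (\<Sum>j\<in>T. col_sum m A j)"
    using M A T unfolding matrix_class_def by (intro sum.cong) auto
  hence eq: "(\<Sum>q\<in>{1..m}. card (rowset n M q \<inter> T)) = (\<Sum>q\<in>{1..m}. card (rowset n A q \<inter> T))"
    using sum_T_card[OF M01 T] sum_T_card[OF A01 T] by simp
  have rc: "card (rowset n M q) = card (rowset n A q)" if "q \<in> {1..m}" for q
    using M A that row_sum_card[OF M01] row_sum_card[OF A01] unfolding matrix_class_def by auto
  have le: "card (rowset n M q \<inter> T) \<le> card (rowset n A q \<inter> T)" if q: "q \<in> {1..m}" for q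
  proof (cases "T \<subseteq> rowset n A q")
    case True
    hence "rowset n A q \<inter> T = T" by auto
    thus ?thesis using fT by (simp add: card_mono)
  next
    case False
    hence "rowset n A q \<inter> T = rowset n A q" using H q by auto
    moreover have "card (rowset n M q \<inter> T) \<le> card (rowset n M q)" by (rule card_mono[OF fr]) auto
    ultimately show ?thesis using rc[OF q] by simp
  qed
  have ceq: "card (rowset n M r \<inter> T) = card (rowset n A r \<inter> T)"
    using sum_mono_inv[OF eq le r] r by auto
  show ?thesis
  proof (intro conjI impI)
    assume "T \<subseteq> rowset n A r"
    hence "card (rowset n M r \<inter> T) = card T" using ceq by (simp add: Int_absorb1)
    hence "rowset n M r \<inter> T = T" using fT by (intro card_subset_eq) auto
    thus "T \<subseteq> rowset n M r" by auto
  next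
    assume "rowset n A r \<subseteq> T"
    hence "card (rowset n M r \<inter> T) = card (rowset n M r)" using ceq rc[OF r] by (simp add: Int_absorb2)
    hence "rowset n M r \<inter> T = rowset n M r" using fr by (intro card_subset_eq) auto
    thus "rowset n M r \<subseteq> T" by auto
  qed
qed




lemma interval_pick:
  fixes a b :: nat
  assumes "a < b" "{a+1..b} \<subseteq> X" "X \<subseteq> {a..b+1}" "card X = b + 1 - a"
  shows "X = {a..b} \<or> X = {a+1..b+1}"
proof -
  have X: "X = {a+1..b} \<union> (X \<inter> {a, b+1})" using assms(2,3) by auto
  consider "a \<in> X" "b+1 \<in> X" | "a \<in> X" "b+1 \<notin> X" | "a \<notin> X" "b+1 \<in> X" | "a \<notin> X" "b+1 \<notin> X" by blast
  thus ?thesis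
  proof cases
    case 1
    hence "X = {a..b+1}" using assms(2,3) by (auto simp: subset_iff) (metis Suc_leI le_antisym linorder_not_le)
    thus ?thesis using assms(4) by simp
  next
    case 2
    hence "X = {a..b}" using assms(2,3) by (auto simp: subset_iff) (metis Suc_leI le_antisym linorder_not_le le_SucE)+
    thus ?thesis by simp
  next
    case 3
    hence "X = {a+1..b+1}" using assms(2,3) by (auto simp: subset_iff) (metis Suc_leI le_antisym linorder_not_le le_SucE)+
    thus ?thesis by simp
  next
    case 4
    hence "X = {a+1..b}" using assms(2,3) by (auto simp: subset_iff) (metis Suc_leI le_antisym linorder_not_le le_SucE)+
    thus ?thesis using assms(4) assms(1) by simp
  qed
qed




definition pidx :: "nat \<Rightarrow> nat \<Rightarrow> nat" where
  "pidx k r = (if r \<le> k then r else 2*k+1-r)"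

definition prow :: "nat \<Rightarrow> (nat \<Rightarrow> nat set) \<Rightarrow> (nat \<Rightarrow> nat set) \<Rightarrow> nat \<Rightarrow> nat set" where
  "prow k J J' r = (if r \<le> k then J r else J' (2*k+1-r))"

lemma pair_matrix_alt:
  "pair_matrix k J J' i j = (if 1 \<le> i \<and> i \<le> 2*k \<and> j \<in> prow k J J' i then 1 else 0)"
  unfolding pair_matrix_def prow_def by auto

lemma prow_sub:
  assumes "\<forall>p\<in>{1..k}. J p \<subseteq> {1..n} \<and> J' p \<subseteq> {1..n}" "r \<in> {1..2*k}"
  shows "prow k J J' r \<subseteq> {1..n}"
proof (cases "r \<le> k")
  case True thus ?thesis using assms unfolding prow_def by auto
next
  case False
  hence "2*k+1-r \<in> {1..k}" using assms(2) by auto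
  thus ?thesis using assms(1) False unfolding prow_def by auto
qed

lemma pair_matrix_01:
  assumes "\<forall>p\<in>{1..k}. J p \<subseteq> {1..n} \<and> J' p \<subseteq> {1..n}"
  shows "pair_matrix k J J' \<in> zero_one_matrices (2*k) n"
  unfolding zero_one_matrices_def
proof (intro CollectI conjI allI impI)
  fix i j show "pair_matrix k J J' i j \<in> {0,1}" by (simp add: pair_matrix_alt)
next
  fix i j assume "i \<notin> {1..2*k} \<or> j \<notin> {1..n}"
  thus "pair_matrix k J J' i j = 0"
    using prow_sub[OF assms, of i] unfolding pair_matrix_alt by (auto simp: subset_iff)
qed

lemma rowset_pair:
  assumes "\<forall>p\<in>{1..k}. J p \<subseteq> {1..n} \<and> J' p \<subseteq> {1..n}" "r \<in> {1..2*k}"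
  shows "rowset n (pair_matrix k J J') r = prow k J J' r"
proof -
  have "prow k J J' r \<subseteq> {1..n}"
    using prow_sub[OF assms] .
  thus ?thesis using assms(2) unfolding rowset_def pair_matrix_alt by auto
qed

lemma col_sum_pair:
  "col_sum (2*k) (pair_matrix k J J') j =
     (\<Sum>i\<in>{1..k}. (if j \<in> J i then 1 else 0) + (if j \<in> J' i then 1 else 0))"
proof -
  have U: "{1..2*k} = {1..k} \<union> {k+1..2*k}" by auto
  have "col_sum (2*k) (pair_matrix k J J') j
     = (\<Sum>i\<in>{1..k}. pair_matrix k J J' i j) + (\<Sum>i\<in>{k+1..2*k}. pair_matrix k J J' i j)"
    unfolding col_sum_def U by (rule sum.union_disjoint) auto
  also have "(\<Sum>i\<in>{1..k}. pair_matrix k J J' i j) = (\<Sum>i\<in>{1..k}. (if j \<in> J i then 1 else 0))"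
    by (rule sum.cong) (auto simp: pair_matrix_def)
  also have "(\<Sum>i\<in>{k+1..2*k}. pair_matrix k J J' i j) = (\<Sum>i\<in>{1..k}. (if j \<in> J' i then 1 else 0))"
    by (rule sum.reindex_bij_witness[where i="\<lambda>i. 2*k+1-i" and j="\<lambda>i. 2*k+1-i"])
       (auto simp: pair_matrix_def)
  finally show ?thesis by (simp add: sum.distrib)
qed

lemma row_sum_pair:
  assumes "\<forall>p\<in>{1..k}. J p \<subseteq> {1..n} \<and> J' p \<subseteq> {1..n}" "r \<in> {1..2*k}"
  shows "row_sum n (pair_matrix k J J') r = card (prow k J J' r)"
  using row_sum_card[OF pair_matrix_01[OF assms(1)]] rowset_pair[OF assms] by simp

lemma zero_one_eqI:
  assumes "N \<in> zero_one_matrices m n" "N' \<in> zero_one_matrices m n"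
    "\<forall>i\<in>{1..m}. rowset n N i = rowset n N' i"
  shows "N = N'"
proof (intro ext)
  fix i j
  show "N i j = N' i j"
  proof (cases "i \<in> {1..m} \<and> j \<in> {1..n}")
    case True
    hence "(N i j = 1) = (N' i j = 1)" using assms(3) unfolding rowset_def by blast
    moreover have "N i j \<in> {0,1}" "N' i j \<in> {0,1}" using assms(1,2) unfolding zero_one_matrices_def by auto
    ultimately show ?thesis by auto
  next
    case False
    thus ?thesis using assms(1,2) unfolding zero_one_matrices_def by auto
  qed
qed




lemma prow_low[simp]: "p \<le> k \<Longrightarrow> prow k J J' p = J p"
  unfolding prow_def by simp
lemma prow_high[simp]: "p \<in> {1..k} \<Longrightarrow> prow k J J' (2*k+1-p) = J' p"
  unfolding prow_def by auto
lemma pidx_low[simp]: "p \<le> k \<Longrightarrow> pidx k p = p"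
  unfolding pidx_def by simp
lemma pidx_high[simp]: "p \<in> {1..k} \<Longrightarrow> pidx k (2*k+1-p) = p"
  unfolding pidx_def by auto
lemma prow_high'[simp]: "Suc 0 \<le> p \<Longrightarrow> p \<le> k \<Longrightarrow> prow k J J' (Suc (2*k) - p) = J' p"
  unfolding prow_def by auto
lemma pidx_high'[simp]: "Suc 0 \<le> p \<Longrightarrow> p \<le> k \<Longrightarrow> pidx k (Suc (2*k) - p) = p"
  unfolding pidx_def by auto
lemma pidx_range: "r \<in> {1..2*k} \<Longrightarrow> pidx k r \<in> {1..k}"
  unfolding pidx_def by auto
lemma pidx_eq: "r \<in> {1..2*k} \<Longrightarrow> pidx k r = p \<Longrightarrow> r = p \<or> r = 2*k+1-p"
  unfolding pidx_def by (auto split: if_splits)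

lemma entry_rowset:
  assumes "N \<in> zero_one_matrices m n" "j \<in> {1..n}"
  shows "N r j = (if j \<in> rowset n N r then 1 else 0)"
  using assms unfolding zero_one_matrices_def rowset_def by auto

locale pmloc =
  fixes k n :: nat and I I' :: "nat \<Rightarrow> nat set"
  assumes k1: "k \<ge> 1" and n1: "n \<ge> 1"
    and ivI: "\<forall>i \<in> {1..k}. \<exists>a b. I i = {a..b}"
    and ivI': "\<forall>i \<in> {1..k}. \<exists>a b. I' i = {a..b}"
    and sub: "\<forall>i \<in> {1..k}. I i \<subseteq> {1..n} \<and> I' i \<subseteq> {1..n}"
    and sh: "\<forall>i \<in> {1..k}. one_shift_pair (I i) (I' i)"
    and nest: "\<forall>i \<in> {2..k}. I (i - 1) \<union> I' (i - 1) \<subseteq> I i \<inter> I' i"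
    and nz: "\<forall>j \<in> {1..n}. \<exists>i \<in> {1..2*k}. pair_matrix k I I' i j \<noteq> 0"
begin

definition "Jf F i = (if i \<in> F then I' i else I i)"
definition "Jf' F i = (if i \<in> F then I i else I' i)"
definition "swapm F = pair_matrix k (Jf F) (Jf' F)"
definition "Cs p = I p \<inter> I' p"
definition "Us p = I p \<union> I' p"

abbreviation "AA \<equiv> pair_matrix k I I'"
abbreviation "cls \<equiv> matrix_class (2*k) n (row_sum n AA) (col_sum (2*k) AA)"

lemma shiftE:
  assumes "p \<in> {1..k}"
  obtains a b where "a < b" "(I p = {a..b} \<and> I' p = {a+1..b+1}) \<or> (I' p = {a..b} \<and> I p = {a+1..b+1})"
  using sh assms unfolding one_shift_pair_def by blast

lemma CU_ab:
  assumes "p \<in> {1..k}" "a < b" "(I p = {a..b} \<and> I' p = {a+1..b+1}) \<or> (I' p = {a..b} \<and> I p = {a+1..b+1})"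
  shows "Cs p = {a+1..b}" "Us p = {a..b+1}" "card (I p) = b + 1 - a" "card (I' p) = b + 1 - a"
  using assms unfolding Cs_def Us_def by auto

lemma I_neq: "p \<in> {1..k} \<Longrightarrow> I p \<noteq> I' p"
  by (erule shiftE) auto

lemma CU: "Cs p \<subseteq> Us p" unfolding Cs_def Us_def by auto

lemma UC_mono:
  assumes "p \<in> {1..k}" "q \<in> {1..k}" "p < q"
  shows "Us p \<subseteq> Cs q"
proof -
  have "Suc p \<le> q" using assms by auto
  thus ?thesis using assms(2)
  proof (induction q rule: dec_induct)
    case base
    have "Suc p \<in> {2..k}" using base assms(1) by auto
    from nest[rule_format, OF this] show ?case unfolding Us_def Cs_def by simp
  next
    case (step q)
    hence "Us p \<subseteq> Cs q" using assms by auto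
    also have "\<dots> \<subseteq> Us q" by (rule CU)
    also have "\<dots> \<subseteq> Cs (Suc q)"
    proof -
      have "Suc q \<in> {2..k}" using step.prems step.hyps assms(1) by auto
      from nest[rule_format, OF this] show ?thesis unfolding Us_def Cs_def by simp
    qed
    finally show ?case .
  qed
qed

lemma sub_J: "\<forall>p\<in>{1..k}. Jf F p \<subseteq> {1..n} \<and> Jf' F p \<subseteq> {1..n}"
  using sub unfolding Jf_def Jf'_def by auto

lemma AA_swap: "AA = swapm {}"
  unfolding swapm_def Jf_def Jf'_def by simp

lemma prow_swap:
  assumes "r \<in> {1..2*k}"
  shows "prow k (Jf F) (Jf' F) r \<in> {I (pidx k r), I' (pidx k r)}"
proof (cases "r \<le> k")
  case True thus ?thesis unfolding Jf_def by auto
next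
  case False
  define p where "p = 2*k+1-r"
  have p: "p \<in> {1..k}" and rp: "r = 2*k+1-p" using assms False unfolding p_def by auto
  have "prow k (Jf F) (Jf' F) r = Jf' F p" "pidx k r = p" using prow_high[OF p, of "Jf F" "Jf' F"] pidx_high[OF p] rp by simp_all
  thus ?thesis unfolding Jf'_def by auto
qed

lemma prow_CU:
  assumes "r \<in> {1..2*k}"
  shows "Cs (pidx k r) \<subseteq> prow k (Jf F) (Jf' F) r" "prow k (Jf F) (Jf' F) r \<subseteq> Us (pidx k r)"
  using prow_swap[OF assms, of F] unfolding Cs_def Us_def by auto

lemma swap_in: "swapm F \<in> cls"
proof -
  have r: "row_sum n (swapm F) r = row_sum n AA r" if "r \<in> {1..2*k}" for r
  proof -
    have p: "pidx k r \<in> {1..k}" using pidx_range that .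
    have c: "card (I' (pidx k r)) = card (I (pidx k r))"
      using p by (rule shiftE) (metis CU_ab(3,4) p)
    have "row_sum n (swapm F) r = card (prow k (Jf F) (Jf' F) r)"
      unfolding swapm_def using row_sum_pair[OF sub_J that] .
    also have "\<dots> = card (I (pidx k r))" using prow_swap[OF that, of F] c by auto
    also have "\<dots> = card (prow k (Jf {}) (Jf' {}) r)" using prow_swap[OF that, of "{}"] c by auto
    also have "\<dots> = row_sum n AA r"
      unfolding AA_swap swapm_def using row_sum_pair[OF sub_J that] by simp
    finally show ?thesis .
  qed
  have c: "col_sum (2*k) (swapm F) j = col_sum (2*k) AA j" for j
    unfolding swapm_def col_sum_pair Jf_def Jf'_def by (rule sum.cong) auto
  have "swapm F \<in> zero_one_matrices (2*k) n" unfolding swapm_def by (rule pair_matrix_01[OF sub_J])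
  thus ?thesis unfolding matrix_class_def using r c by blast
qed

lemma AA_in: "AA \<in> cls" using swap_in[of "{}"] AA_swap by simp

lemma rowset_AA: "r \<in> {1..2*k} \<Longrightarrow> rowset n AA r = prow k (Jf {}) (Jf' {}) r"
  unfolding AA_swap swapm_def by (rule rowset_pair[OF sub_J])

lemma Cs_sub: "p \<in> {1..k} \<Longrightarrow> Cs p \<subseteq> {1..n}" using sub unfolding Cs_def by auto
lemma Us_sub: "p \<in> {1..k} \<Longrightarrow> Us p \<subseteq> {1..n}" using sub unfolding Us_def by auto

lemma forced:
  assumes M: "M \<in> cls" and r: "r \<in> {1..2*k}" and p: "p \<in> {1..k}"
  shows "pidx k r \<ge> p \<Longrightarrow> Cs p \<subseteq> rowset n M r"
    and "pidx k r < p \<Longrightarrow> rowset n M r \<subseteq> Cs p"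
    and "pidx k r \<le> p \<Longrightarrow> rowset n M r \<subseteq> Us p"
    and "pidx k r > p \<Longrightarrow> Us p \<subseteq> rowset n M r"
proof -
  have RA: "Cs (pidx k q) \<subseteq> rowset n AA q \<and> rowset n AA q \<subseteq> Us (pidx k q)" if "q \<in> {1..2*k}" for q
    using prow_CU[OF that, of "{}"] rowset_AA[OF that] by simp
  have HC: "\<forall>q\<in>{1..2*k}. rowset n AA q \<subseteq> Cs p \<or> Cs p \<subseteq> rowset n AA q"
  proof
    fix q assume q: "q \<in> {1..2*k}"
    have pq: "pidx k q \<in> {1..k}" using pidx_range[OF q] .
    consider "pidx k q < p" | "pidx k q = p" | "pidx k q > p" by linarith
    thus "rowset n AA q \<subseteq> Cs p \<or> Cs p \<subseteq> rowset n AA q"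
    proof cases
      case 1 thus ?thesis using RA[OF q] UC_mono[OF pq p] by blast
    next
      case 2 thus ?thesis using RA[OF q] by blast
    next
      case 3 thus ?thesis using RA[OF q] UC_mono[OF p pq] CU[of p] by blast
    qed
  qed
  have HU: "\<forall>q\<in>{1..2*k}. rowset n AA q \<subseteq> Us p \<or> Us p \<subseteq> rowset n AA q"
  proof
    fix q assume q: "q \<in> {1..2*k}"
    have pq: "pidx k q \<in> {1..k}" using pidx_range[OF q] .
    consider "pidx k q < p" | "pidx k q = p" | "pidx k q > p" by linarith
    thus "rowset n AA q \<subseteq> Us p \<or> Us p \<subseteq> rowset n AA q"
    proof cases
      case 1 thus ?thesis using RA[OF q] UC_mono[OF pq p] CU[of p] by blast
    next
      case 2 thus ?thesis using RA[OF q] by blast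
    next
      case 3 thus ?thesis using RA[OF q] UC_mono[OF p pq] by blast
    qed
  qed
  note FC = rows_forced[OF M AA_in Cs_sub[OF p] HC r]
  note FU = rows_forced[OF M AA_in Us_sub[OF p] HU r]
  have pr: "pidx k r \<in> {1..k}" using pidx_range[OF r] .
  show "pidx k r \<ge> p \<Longrightarrow> Cs p \<subseteq> rowset n M r"
  proof -
    assume a: "pidx k r \<ge> p"
    have "Cs p \<subseteq> rowset n AA r"
    proof (cases "pidx k r = p")
      case True thus ?thesis using RA[OF r] by simp
    next
      case False thus ?thesis using a RA[OF r] UC_mono[OF p pr] CU[of p] by auto
    qed
    thus ?thesis using FC by blast
  qed
  show "pidx k r < p \<Longrightarrow> rowset n M r \<subseteq> Cs p"
    using FC RA[OF r] UC_mono[OF pr p] by blast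
  show "pidx k r \<le> p \<Longrightarrow> rowset n M r \<subseteq> Us p"
  proof -
    assume a: "pidx k r \<le> p"
    have "rowset n AA r \<subseteq> Us p"
    proof (cases "pidx k r = p")
      case True thus ?thesis using RA[OF r] by simp
    next
      case False thus ?thesis using a RA[OF r] UC_mono[OF pr p] CU[of p] by auto
    qed
    thus ?thesis using FU by blast
  qed
  show "pidx k r > p \<Longrightarrow> Us p \<subseteq> rowset n M r"
    using FU RA[OF r] UC_mono[OF p pr] by blast
qed

end



context pmloc begin

lemma Jf_empty[simp]: "Jf {} = I" "Jf' {} = I'"
  unfolding Jf_def Jf'_def by auto

lemma pair_key:
  assumes M: "M \<in> cls" and p: "p \<in> {1..k}"
  shows "(rowset n M p = I p \<and> rowset n M (2*k+1-p) = I' p) \<or>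
         (rowset n M p = I' p \<and> rowset n M (2*k+1-p) = I p)"
proof -
  define q where "q = 2*k+1-p"
  have pr: "p \<in> {1..2*k}" "q \<in> {1..2*k}" "p \<noteq> q" "pidx k p = p" "pidx k q = p"
    using p unfolding q_def by auto
  obtain a b where ab: "a < b" "(I p = {a..b} \<and> I' p = {a+1..b+1}) \<or> (I' p = {a..b} \<and> I p = {a+1..b+1})"
    by (rule shiftE[OF p])
  note cu = CU_ab[OF p ab]
  have M01: "M \<in> zero_one_matrices (2*k) n" using M unfolding matrix_class_def by auto
  have A01: "AA \<in> zero_one_matrices (2*k) n" using AA_in unfolding matrix_class_def by auto
  have rAp: "rowset n AA p = I p" using rowset_AA[OF pr(1)] p by simp
  have rAq: "rowset n AA q = I' p" using rowset_AA[OF pr(2)] p unfolding q_def by simp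
  have rc: "card (rowset n M r) = b+1-a" if r: "r \<in> {p,q}" for r
  proof -
    have r2: "r \<in> {1..2*k}" using r pr by auto
    have "card (rowset n M r) = row_sum n M r" using row_sum_card[OF M01] by simp
    also have "\<dots> = row_sum n AA r" using M r2 unfolding matrix_class_def by auto
    also have "\<dots> = card (rowset n AA r)" using row_sum_card[OF A01] by simp
    finally show ?thesis using r rAp rAq cu by auto
  qed
  have choice: "rowset n M r = {a..b} \<or> rowset n M r = {a+1..b+1}" if r: "r \<in> {p,q}" for r
  proof -
    have r2: "r \<in> {1..2*k}" and pe: "pidx k r = p" using r pr by auto
    have "Cs p \<subseteq> rowset n M r" "rowset n M r \<subseteq> Us p"
      using forced(1)[OF M r2 p] forced(3)[OF M r2 p] pe by auto
    thus ?thesis using interval_pick[OF ab(1)] cu rc[OF r] by auto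
  qed
  have aU: "a \<in> Us p" using cu(2) ab(1) by simp
  hence a1: "a \<in> {1..n}" using Us_sub[OF p] by blast
  have other: "N r a = AA r a" if N: "N \<in> cls" and r: "r \<in> {1..2*k} - {p} - {q}" for N r
  proof -
    have r2: "r \<in> {1..2*k}" using r by auto
    have ne: "pidx k r \<noteq> p" using pidx_eq[OF r2] r unfolding q_def by auto
    have N01: "N \<in> zero_one_matrices (2*k) n" using N unfolding matrix_class_def by auto
    show ?thesis
    proof (cases "pidx k r < p")
      case True
      hence "rowset n N r \<subseteq> Cs p" "rowset n AA r \<subseteq> Cs p"
        using forced(2)[OF N r2 p] forced(2)[OF AA_in r2 p] by auto
      hence "a \<notin> rowset n N r" "a \<notin> rowset n AA r" using cu by auto
      thus ?thesis using entry_rowset[OF N01 a1] entry_rowset[OF A01 a1] by simp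
    next
      case False
      hence "pidx k r > p" using ne by auto
      hence "Us p \<subseteq> rowset n N r" "Us p \<subseteq> rowset n AA r"
        using forced(4)[OF N r2 p] forced(4)[OF AA_in r2 p] by auto
      hence "a \<in> rowset n N r" "a \<in> rowset n AA r" using aU by blast+
      thus ?thesis using entry_rowset[OF N01 a1] entry_rowset[OF A01 a1] by simp
    qed
  qed
  have split: "col_sum (2*k) N a = N p a + (N q a + (\<Sum>r\<in>{1..2*k} - {p} - {q}. N r a))" for N
  proof -
    have "col_sum (2*k) N a = N p a + (\<Sum>r\<in>{1..2*k} - {p}. N r a)"
      unfolding col_sum_def using pr by (intro sum.remove) auto
    also have "(\<Sum>r\<in>{1..2*k} - {p}. N r a) = N q a + (\<Sum>r\<in>{1..2*k} - {p} - {q}. N r a)"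
      using pr by (intro sum.remove) auto
    finally show ?thesis .
  qed
  have "col_sum (2*k) M a = col_sum (2*k) AA a" using M a1 unfolding matrix_class_def by auto
  moreover have "(\<Sum>r\<in>{1..2*k} - {p} - {q}. M r a) = (\<Sum>r\<in>{1..2*k} - {p} - {q}. AA r a)"
    using other[OF M] by (intro sum.cong) auto
  ultimately have eq: "M p a + M q a = AA p a + AA q a" using split[of M] split[of AA] by simp
  have "AA p a + AA q a = 1"
    using entry_rowset[OF A01 a1, of p] entry_rowset[OF A01 a1, of q] rAp rAq ab by auto
  hence "M p a + M q a = 1" using eq by simp
  moreover note e1 = entry_rowset[OF M01 a1, of p] and e2 = entry_rowset[OF M01 a1, of q]
  ultimately have "(a \<in> rowset n M p) \<noteq> (a \<in> rowset n M q)"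
    by (cases "a \<in> rowset n M p"; cases "a \<in> rowset n M q") simp_all
  hence "(rowset n M p = {a..b} \<and> rowset n M q = {a+1..b+1}) \<or> (rowset n M p = {a+1..b+1} \<and> rowset n M q = {a..b})"
    using choice[of p] choice[of q] by auto
  thus ?thesis using ab unfolding q_def by auto
qed

lemma swap01: "swapm F \<in> zero_one_matrices (2*k) n"
  unfolding swapm_def by (rule pair_matrix_01[OF sub_J])

lemma rowset_swap: "r \<in> {1..2*k} \<Longrightarrow> rowset n (swapm F) r = prow k (Jf F) (Jf' F) r"
  unfolding swapm_def by (rule rowset_pair[OF sub_J])

lemma charac:
  assumes M: "M \<in> cls"
  shows "\<exists>F\<subseteq>{1..k}. M = swapm F"
proof (intro exI conjI)
  define F where "F = {p\<in>{1..k}. rowset n M p = I' p}"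
  show "F \<subseteq> {1..k}" unfolding F_def by auto
  have M01: "M \<in> zero_one_matrices (2*k) n" using M unfolding matrix_class_def by auto
  show "M = swapm F"
  proof (rule zero_one_eqI[OF M01 swap01], intro ballI)
    fix i assume i: "i \<in> {1..2*k}"
    define p where "p = pidx k i"
    have p: "p \<in> {1..k}" using pidx_range[OF i] p_def by simp
    have ne: "I p \<noteq> I' p" using I_neq[OF p] .
    note key = pair_key[OF M p]
    consider "i = p" | "i = 2*k+1-p" using pidx_eq[OF i] p_def by auto
    thus "rowset n M i = rowset n (swapm F) i"
    proof cases
      case 1
      have "rowset n (swapm F) i = Jf F p" using rowset_swap[OF i] 1 p by simp
      thus ?thesis using key ne 1 p unfolding Jf_def F_def by auto
    next
      case 2
      have "rowset n (swapm F) i = Jf' F p" using rowset_swap[OF i] 2 p by simp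
      thus ?thesis using key ne 2 p unfolding Jf'_def F_def by auto
    qed
  qed
qed

lemma swap_inj_aux:
  assumes "swapm F = swapm G" "p \<in> F" "F \<subseteq> {1..k}"
  shows "p \<in> G"
proof (rule ccontr)
  assume "p \<notin> G"
  have p: "p \<in> {1..k}" using assms by auto
  hence pi: "p \<in> {1..2*k}" by auto
  have "rowset n (swapm F) p = I' p" using rowset_swap[OF pi] p assms(2) unfolding Jf_def by simp
  moreover have "rowset n (swapm G) p = I p" using rowset_swap[OF pi] p \<open>p \<notin> G\<close> unfolding Jf_def by simp
  ultimately show False using assms(1) I_neq[OF p] by simp
qed

lemma swap_inj: "inj_on swapm (Pow {1..k})"
proof (rule inj_onI)
  fix F G assume F: "F \<in> Pow {1..k}" and G: "G \<in> Pow {1..k}" and e: "swapm F = swapm G"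
  have "F \<subseteq> G" using swap_inj_aux[OF e] F by blast
  moreover have "G \<subseteq> F" using swap_inj_aux[OF e[symmetric]] G by blast
  ultimately show "F = G" by blast
qed

lemma swap_one: "swapm F i j = 1 \<longleftrightarrow> i \<in> {1..2*k} \<and> j \<in> prow k (Jf F) (Jf' F) i"
  unfolding swapm_def pair_matrix_alt by simp

lemma up:
  assumes r: "r \<in> {1..2*k}" and r': "r' \<in> {1..2*k}" and j: "j \<in> prow k (Jf F) (Jf' F) r"
    and lt: "pidx k r < pidx k r'"
  shows "j \<in> prow k (Jf F) (Jf' F) r'"
  using prow_CU(2)[OF r, of F] UC_mono[OF pidx_range[OF r] pidx_range[OF r'] lt] prow_CU(1)[OF r', of F] j
  by blast

lemma swap_convex: "convex_matrix (2*k) n (swapm F)"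
  unfolding convex_matrix_def
proof (intro conjI ballI allI impI)
  fix i j1 j j2
  assume i: "i \<in> {1..2*k}" and h: "j1 \<le> j \<and> j \<le> j2 \<and> swapm F i j1 = 1 \<and> swapm F i j2 = 1"
  have jj: "j1 \<in> prow k (Jf F) (Jf' F) i" "j2 \<in> prow k (Jf F) (Jf' F) i"
    using h unfolding swap_one by simp_all
  have ex: "\<exists>a b. prow k (Jf F) (Jf' F) i = {a..b}"
  proof -
    have q: "pidx k i \<in> {1..k}" by (rule pidx_range[OF i])
    have e1: "\<exists>a b. I (pidx k i) = {a..b}" using ivI q by blast
    have e2: "\<exists>a b. I' (pidx k i) = {a..b}" using ivI' q by blast
    show ?thesis
    proof (cases "prow k (Jf F) (Jf' F) i = I (pidx k i)")
      case True thus ?thesis using e1 by simp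
    next
      case False
      hence "prow k (Jf F) (Jf' F) i = I' (pidx k i)" using prow_swap[OF i, of F] by blast
      thus ?thesis using e2 by simp
    qed
  qed
  then obtain a b where X: "prow k (Jf F) (Jf' F) i = {a..b}" by blast
  have "j \<in> prow k (Jf F) (Jf' F) i" using jj h unfolding X by simp
  thus "swapm F i j = 1" using i unfolding swap_one by simp
next
  fix j i1 i i2
  assume h: "i1 \<le> i \<and> i \<le> i2 \<and> swapm F i1 j = 1 \<and> swapm F i2 j = 1"
  have i1: "i1 \<in> {1..2*k}" "j \<in> prow k (Jf F) (Jf' F) i1"
    using h unfolding swap_one by simp_all
  have i2: "i2 \<in> {1..2*k}" "j \<in> prow k (Jf F) (Jf' F) i2"
    using h unfolding swap_one by simp_all
  have i: "i \<in> {1..2*k}" using i1 i2 h by auto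
  have "j \<in> prow k (Jf F) (Jf' F) i"
  proof (cases "i \<le> k")
    case True
    show ?thesis
    proof (cases "i1 = i")
      case True thus ?thesis using i1 by simp
    next
      case False
      hence "pidx k i1 < pidx k i" using \<open>i \<le> k\<close> h unfolding pidx_def by auto
      thus ?thesis using up[OF i1(1) i i1(2)] by simp
    qed
  next
    case False
    show ?thesis
    proof (cases "i2 = i")
      case True thus ?thesis using i2 by simp
    next
      case ne: False
      hence "pidx k i2 < pidx k i" using False h i2(1) unfolding pidx_def by auto
      thus ?thesis using up[OF i2(1) i i2(2)] by simp
    qed
  qed
  thus "swapm F i j = 1" using i unfolding swap_one by simp
qed

lemma cls_eq: "cls = swapm ` Pow {1..k}"
  using charac swap_in by blast

lemma final:
  "convex_class (2*k) n (row_sum n AA) (col_sum (2*k) AA) \<and> card cls = 2 ^ k"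
proof
  show "convex_class (2*k) n (row_sum n AA) (col_sum (2*k) AA)"
    unfolding convex_class_def cls_eq using swap_convex by blast
  have "card cls = card (Pow {1..k})" unfolding cls_eq by (rule card_image[OF swap_inj])
  thus "card cls = 2 ^ k" by (simp add: card_Pow)
qed

end

theorem mainTheorem10:
  fixes k n :: nat and I I' :: "nat \<Rightarrow> nat set"
  assumes "k \<ge> 1" and "n \<ge> 1"
    and "\<forall>i \<in> {1..k}. \<exists>a b. I i = {a..b}"
    and "\<forall>i \<in> {1..k}. \<exists>a b. I' i = {a..b}"
    and "\<forall>i \<in> {1..k}. I i \<subseteq> {1..n} \<and> I' i \<subseteq> {1..n}"
    and "\<forall>i \<in> {1..k}. one_shift_pair (I i) (I' i)"
    and "\<forall>i \<in> {2..k}. I (i - 1) \<union> I' (i - 1) \<subseteq> I i \<inter> I' i"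
    and "\<forall>j \<in> {1..n}. \<exists>i \<in> {1..2*k}. pair_matrix k I I' i j \<noteq> 0"
  shows "convex_class (2*k) n (row_sum n (pair_matrix k I I')) (col_sum (2*k) (pair_matrix k I I'))
         \<and> card (matrix_class (2*k) n (row_sum n (pair_matrix k I I')) (col_sum (2*k) (pair_matrix k I I'))) = 2 ^ k"
  proof -
  interpret pmloc k n I I' using assms by unfold_locales
  show ?thesis by (rule final)
qed

end
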